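(* For any American type option, the equal risk price with commitment $p^*_c$ is smaller than or equal to the equal risk price without commitment $p^*_{nc}$ (assuming both exist).
   Context: Discrete-time setting: filtered probability space $(\Omega,\mathcal{F},(\mathcal{F}_t),\mathbb{P})$, zero interest rate, risky asset with $S_k:=S_{t_k}$, trading dates $t_0<\dots<t_{K-1}<t_K=T$, $\Delta S_{k+1}=S_{k+1}-S_k$, adapted auxiliary process $Y_k$. An exercise time is a stopping time $\tau:\Omega\to\{0,\dots,K\}$ with $\{\tau=k\}\in\mathcal{F}_{t_k}$; the payoff is $F(S_\tau,Y_\tau)=\sum_{k=0}^K\mathbf{1}\{\tau=k\}F_k(S_k,Y_k)$. The set $\bar{\mathcal{X}}_\tau(p_0)$ consists of wealth processes defined for every exercise time $\tau$ by $X^\tau_0=p_0$ and $X^\tau_{k+1}(\tau)=X^\tau_k(\tau)+(\xi_k\mathbf{1}\{\tau>k\}+\sum_{i=0}^k\hat\xi^i_k\mathbf{1}\{\tau=i\})\Delta S_{k+1}$, where $\xi_k,\hat\xi^i_k$ are $\mathcal{F}_{t_k}$-measurable (not depending on $\tau$). Risk measures $\rho^w,\rho^b$ (on random costs) are certainty equivalents ($\rho(c)=c$ for $c\in\mathbb{R}$), monotone, and strictly monotone with respect to certain amounts. Define $\varrho^w(p_0,\tau)=\inf_{X^\tau\in\bar{\mathcal{X}}_\tau(p_0)}\rho^w(F(S_\tau,Y_\tau)-X^\tau_K(\tau))$, $\varrho^b(p_0,\tau)=\inf_{X^\tau\in\bar{\mathcal{X}}_\tau(-p_0)}\rho^b(-F(S_\tau,Y_\tau)-X^\tau_K(\tau))$,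 $\varrho^w_\tau(p_0)=\inf_{X^\tau\in\bar{\mathcal{X}}_\tau(p_0)}\sup_\tau\rho^w(F(S_\tau,Y_\tau)-X^\tau_K(\tau))$ and $\varrho^b_\tau(p_0)=\inf_{X^\tau\in\bar{\mathcal{X}}_\tau(-p_0)}\inf_\tau\rho^b(-F(S_\tau,Y_\tau)-X^\tau_K(\tau))$. The ERP with commitment is the unique $p_0^*$ for which some $\tau^*$ satisfies $\varrho^w(p_0^*,\tau^* )=\varrho^b(p_0^*,\tau^* )\in\mathbb{R}$ and $\tau^*\in\arg\min_\tau\varrho^b(p_0^*,\tau)$. The ERP without commitment is the unique $p_0^*$ with $\varrho^w_\tau(p_0^* )=\varrho^b_\tau(p_0^* )\in\mathbb{R}$. *)

theory Defs
  imports "HOL-Probability.Probability"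
begin

text \<open>Discrete-time market. Time index k = 0..K stands for trading date t_k.
  Fk k is the sigma-algebra F_{t_k}; S k = S_{t_k}; Y k = Y_{t_k}.\<close>

definition dfiltration :: "'w measure \<Rightarrow> nat \<Rightarrow> (nat \<Rightarrow> 'w measure) \<Rightarrow> bool" where
  "dfiltration M K Fk \<longleftrightarrow>
     (\<forall>k\<le>K. space (Fk k) = space M \<and> sets (Fk k) \<subseteq> sets M) \<and>
     (\<forall>k l. k \<le> l \<and> l \<le> K \<longrightarrow> sets (Fk k) \<subseteq> sets (Fk l))"

definition exercise_time :: "'w measure \<Rightarrow> nat \<Rightarrow> (nat \<Rightarrow> 'w measure) \<Rightarrow> ('w \<Rightarrow> nat) \<Rightarrow> bool" where
  "exercise_time M K Fk \<tau> \<longleftrightarrow>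
     (\<forall>\<omega>\<in>space M. \<tau> \<omega> \<le> K) \<and> (\<forall>k\<le>K. {\<omega>\<in>space M. \<tau> \<omega> = k} \<in> sets (Fk k))"

definition exercise_times :: "'w measure \<Rightarrow> nat \<Rightarrow> (nat \<Rightarrow> 'w measure) \<Rightarrow> ('w \<Rightarrow> nat) set" where
  "exercise_times M K Fk = {\<tau>. exercise_time M K Fk \<tau>}"

text \<open>Trading strategies (xi_k, hat-xi^i_k), with hat-xi^i_k = xih i k; both
  F_{t_k}-measurable and independent of the exercise time.\<close>
definition strategies :: "nat \<Rightarrow> (nat \<Rightarrow> 'w measure) \<Rightarrow>
    ((nat \<Rightarrow> 'w \<Rightarrow> real) \<times> (nat \<Rightarrow> nat \<Rightarrow> 'w \<Rightarrow> real)) set" where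
  "strategies K Fk = {(\<xi>, \<xi>h). \<forall>k<K. \<xi> k \<in> borel_measurable (Fk k) \<and>
                         (\<forall>i\<le>k. \<xi>h i k \<in> borel_measurable (Fk k))}"

fun wealth :: "(nat \<Rightarrow> 'w \<Rightarrow> real) \<Rightarrow> (nat \<Rightarrow> 'w \<Rightarrow> real) \<Rightarrow> (nat \<Rightarrow> nat \<Rightarrow> 'w \<Rightarrow> real)
    \<Rightarrow> real \<Rightarrow> ('w \<Rightarrow> nat) \<Rightarrow> nat \<Rightarrow> 'w \<Rightarrow> real" where
  "wealth S \<xi> \<xi>h p0 \<tau> 0 \<omega> = p0"
| "wealth S \<xi> \<xi>h p0 \<tau> (Suc k) \<omega> = wealth S \<xi> \<xi>h p0 \<tau> k \<omega> +
     (\<xi> k \<omega> * (if \<tau> \<omega> > k then 1 else 0) +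
      (\<Sum>i\<le>k. \<xi>h i k \<omega> * (if \<tau> \<omega> = i then 1 else 0))) * (S (Suc k) \<omega> - S k \<omega>)"

definition payoff :: "nat \<Rightarrow> (nat \<Rightarrow> real \<Rightarrow> 'y \<Rightarrow> real) \<Rightarrow> (nat \<Rightarrow> 'w \<Rightarrow> real)
    \<Rightarrow> (nat \<Rightarrow> 'w \<Rightarrow> 'y) \<Rightarrow> ('w \<Rightarrow> nat) \<Rightarrow> 'w \<Rightarrow> real" where
  "payoff K F S Y \<tau> \<omega> = (\<Sum>k\<le>K. (if \<tau> \<omega> = k then 1 else 0) * F k (S k \<omega>) (Y k \<omega>))"

definition certainty_equivalent :: "'w measure \<Rightarrow> (('w \<Rightarrow> real) \<Rightarrow> ereal) \<Rightarrow> bool" where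
  "certainty_equivalent M \<rho> \<longleftrightarrow> (\<forall>c::real. \<rho> (\<lambda>_. c) = ereal c)"

definition monotone_rm :: "'w measure \<Rightarrow> (('w \<Rightarrow> real) \<Rightarrow> ereal) \<Rightarrow> bool" where
  "monotone_rm M \<rho> \<longleftrightarrow> (\<forall>X Z. (\<forall>\<omega>\<in>space M. X \<omega> \<le> Z \<omega>) \<longrightarrow> \<rho> X \<le> \<rho> Z)"

definition strictly_monotone_certain :: "'w measure \<Rightarrow> (('w \<Rightarrow> real) \<Rightarrow> ereal) \<Rightarrow> bool" where
  "strictly_monotone_certain M \<rho> \<longleftrightarrow>
     (\<forall>X (c::real). c > 0 \<and> \<bar>\<rho> X\<bar> \<noteq> \<infinity> \<longrightarrow> \<rho> X < \<rho> (\<lambda>\<omega>. X \<omega> + c))"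

definition risk_measure :: "'w measure \<Rightarrow> (('w \<Rightarrow> real) \<Rightarrow> ereal) \<Rightarrow> bool" where
  "risk_measure M \<rho> \<longleftrightarrow> certainty_equivalent M \<rho> \<and> monotone_rm M \<rho> \<and> strictly_monotone_certain M \<rho>"

definition writer_risk :: "nat \<Rightarrow> (nat \<Rightarrow> 'w measure) \<Rightarrow> (('w \<Rightarrow> real) \<Rightarrow> ereal)
    \<Rightarrow> (nat \<Rightarrow> real \<Rightarrow> 'y \<Rightarrow> real) \<Rightarrow> (nat \<Rightarrow> 'w \<Rightarrow> real) \<Rightarrow> (nat \<Rightarrow> 'w \<Rightarrow> 'y)
    \<Rightarrow> real \<Rightarrow> ('w \<Rightarrow> nat) \<Rightarrow> ereal" where
  "writer_risk K Fk \<rho>w F S Y p0 \<tau> =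
     (INF st\<in>strategies K Fk. \<rho>w (\<lambda>\<omega>. payoff K F S Y \<tau> \<omega> - wealth S (fst st) (snd st) p0 \<tau> K \<omega>))"

definition buyer_risk :: "nat \<Rightarrow> (nat \<Rightarrow> 'w measure) \<Rightarrow> (('w \<Rightarrow> real) \<Rightarrow> ereal)
    \<Rightarrow> (nat \<Rightarrow> real \<Rightarrow> 'y \<Rightarrow> real) \<Rightarrow> (nat \<Rightarrow> 'w \<Rightarrow> real) \<Rightarrow> (nat \<Rightarrow> 'w \<Rightarrow> 'y)
    \<Rightarrow> real \<Rightarrow> ('w \<Rightarrow> nat) \<Rightarrow> ereal" where
  "buyer_risk K Fk \<rho>b F S Y p0 \<tau> =
     (INF st\<in>strategies K Fk. \<rho>b (\<lambda>\<omega>. - payoff K F S Y \<tau> \<omega> - wealth S (fst st) (snd st) (- p0) \<tau> K \<omega>))"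

definition writer_risk_nc :: "'w measure \<Rightarrow> nat \<Rightarrow> (nat \<Rightarrow> 'w measure) \<Rightarrow> (('w \<Rightarrow> real) \<Rightarrow> ereal)
    \<Rightarrow> (nat \<Rightarrow> real \<Rightarrow> 'y \<Rightarrow> real) \<Rightarrow> (nat \<Rightarrow> 'w \<Rightarrow> real) \<Rightarrow> (nat \<Rightarrow> 'w \<Rightarrow> 'y)
    \<Rightarrow> real \<Rightarrow> ereal" where
  "writer_risk_nc M K Fk \<rho>w F S Y p0 =
     (INF st\<in>strategies K Fk. SUP \<tau>\<in>exercise_times M K Fk.
        \<rho>w (\<lambda>\<omega>. payoff K F S Y \<tau> \<omega> - wealth S (fst st) (snd st) p0 \<tau> K \<omega>))"

definition buyer_risk_nc :: "'w measure \<Rightarrow> nat \<Rightarrow> (nat \<Rightarrow> 'w measure) \<Rightarrow> (('w \<Rightarrow> real) \<Rightarrow> ereal)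
    \<Rightarrow> (nat \<Rightarrow> real \<Rightarrow> 'y \<Rightarrow> real) \<Rightarrow> (nat \<Rightarrow> 'w \<Rightarrow> real) \<Rightarrow> (nat \<Rightarrow> 'w \<Rightarrow> 'y)
    \<Rightarrow> real \<Rightarrow> ereal" where
  "buyer_risk_nc M K Fk \<rho>b F S Y p0 =
     (INF st\<in>strategies K Fk. INF \<tau>\<in>exercise_times M K Fk.
        \<rho>b (\<lambda>\<omega>. - payoff K F S Y \<tau> \<omega> - wealth S (fst st) (snd st) (- p0) \<tau> K \<omega>))"

definition erp_c_prop :: "'w measure \<Rightarrow> nat \<Rightarrow> (nat \<Rightarrow> 'w measure) \<Rightarrow> (('w \<Rightarrow> real) \<Rightarrow> ereal)
    \<Rightarrow> (('w \<Rightarrow> real) \<Rightarrow> ereal) \<Rightarrow> (nat \<Rightarrow> real \<Rightarrow> 'y \<Rightarrow> real) \<Rightarrow> (nat \<Rightarrow> 'w \<Rightarrow> real)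
    \<Rightarrow> (nat \<Rightarrow> 'w \<Rightarrow> 'y) \<Rightarrow> real \<Rightarrow> bool" where
  "erp_c_prop M K Fk \<rho>w \<rho>b F S Y p0 \<longleftrightarrow>
     (\<exists>\<tau>s\<in>exercise_times M K Fk.
        writer_risk K Fk \<rho>w F S Y p0 \<tau>s = buyer_risk K Fk \<rho>b F S Y p0 \<tau>s \<and>
        \<bar>writer_risk K Fk \<rho>w F S Y p0 \<tau>s\<bar> \<noteq> \<infinity> \<and>
        (\<forall>\<tau>\<in>exercise_times M K Fk. buyer_risk K Fk \<rho>b F S Y p0 \<tau>s \<le> buyer_risk K Fk \<rho>b F S Y p0 \<tau>))"

definition is_erp_c where
  "is_erp_c M K Fk \<rho>w \<rho>b F S Y p0 \<longleftrightarrow>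
     erp_c_prop M K Fk \<rho>w \<rho>b F S Y p0 \<and> (\<forall>q. erp_c_prop M K Fk \<rho>w \<rho>b F S Y q \<longrightarrow> q = p0)"

definition erp_nc_prop where
  "erp_nc_prop M K Fk \<rho>w \<rho>b F S Y p0 \<longleftrightarrow>
     writer_risk_nc M K Fk \<rho>w F S Y p0 = buyer_risk_nc M K Fk \<rho>b F S Y p0 \<and>
     \<bar>writer_risk_nc M K Fk \<rho>w F S Y p0\<bar> \<noteq> \<infinity>"

definition is_erp_nc where
  "is_erp_nc M K Fk \<rho>w \<rho>b F S Y p0 \<longleftrightarrow>
     erp_nc_prop M K Fk \<rho>w \<rho>b F S Y p0 \<and> (\<forall>q. erp_nc_prop M K Fk \<rho>w \<rho>b F S Y q \<longrightarrow> q = p0)"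

end

theory Submission
  imports Defs
begin

lemma wealth_shift: "wealth S \<xi> \<xi>h p \<tau> k \<omega> = p + wealth S \<xi> \<xi>h 0 \<tau> k \<omega>"
  by (induction k) auto

lemma wnc_mono:
  assumes "monotone_rm M \<rho>w" "p \<le> q"
  shows "writer_risk_nc M K Fk \<rho>w F S Y q \<le> writer_risk_nc M K Fk \<rho>w F S Y p"
  unfolding writer_risk_nc_def
proof (rule INF_mono)
  fix st assume st: "st \<in> strategies K Fk"
  show "\<exists>st'\<in>strategies K Fk. (SUP \<tau>\<in>exercise_times M K Fk. \<rho>w (\<lambda>\<omega>. payoff K F S Y \<tau> \<omega> - wealth S (fst st') (snd st') q \<tau> K \<omega>))
     \<le> (SUP \<tau>\<in>exercise_times M K Fk. \<rho>w (\<lambda>\<omega>. payoff K F S Y \<tau> \<omega> - wealth S (fst st) (snd st) p \<tau> K \<omega>))"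
  proof (rule bexI[OF _ st])
  show "(SUP \<tau>\<in>exercise_times M K Fk. \<rho>w (\<lambda>\<omega>. payoff K F S Y \<tau> \<omega> - wealth S (fst st) (snd st) q \<tau> K \<omega>))
     \<le> (SUP \<tau>\<in>exercise_times M K Fk. \<rho>w (\<lambda>\<omega>. payoff K F S Y \<tau> \<omega> - wealth S (fst st) (snd st) p \<tau> K \<omega>))"
  proof (rule SUP_mono, rule bexI)
    fix \<tau> assume "\<tau> \<in> exercise_times M K Fk"
    then show "\<tau> \<in> exercise_times M K Fk" .
    show "\<rho>w (\<lambda>\<omega>. payoff K F S Y \<tau> \<omega> - wealth S (fst st) (snd st) q \<tau> K \<omega>)
       \<le> \<rho>w (\<lambda>\<omega>. payoff K F S Y \<tau> \<omega> - wealth S (fst st) (snd st) p \<tau> K \<omega>)"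
      using assms unfolding monotone_rm_def
      by (metis (no_types, lifting) add_le_cancel_right diff_left_mono wealth_shift)
  qed
  qed
qed

lemma bnc_mono:
  assumes "monotone_rm M \<rho>b" "p \<le> q"
  shows "buyer_risk_nc M K Fk \<rho>b F S Y p \<le> buyer_risk_nc M K Fk \<rho>b F S Y q"
  unfolding buyer_risk_nc_def
proof (rule INF_mono)
  fix st assume st: "st \<in> strategies K Fk"
  show "\<exists>st'\<in>strategies K Fk. (INF \<tau>\<in>exercise_times M K Fk. \<rho>b (\<lambda>\<omega>. - payoff K F S Y \<tau> \<omega> - wealth S (fst st') (snd st') (- p) \<tau> K \<omega>))
     \<le> (INF \<tau>\<in>exercise_times M K Fk. \<rho>b (\<lambda>\<omega>. - payoff K F S Y \<tau> \<omega> - wealth S (fst st) (snd st) (- q) \<tau> K \<omega>))"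
  proof (rule bexI[OF _ st])
  show "(INF \<tau>\<in>exercise_times M K Fk. \<rho>b (\<lambda>\<omega>. - payoff K F S Y \<tau> \<omega> - wealth S (fst st) (snd st) (- p) \<tau> K \<omega>))
     \<le> (INF \<tau>\<in>exercise_times M K Fk. \<rho>b (\<lambda>\<omega>. - payoff K F S Y \<tau> \<omega> - wealth S (fst st) (snd st) (- q) \<tau> K \<omega>))"
  proof (rule INF_mono, rule bexI)
    fix \<tau> assume "\<tau> \<in> exercise_times M K Fk"
    then show "\<tau> \<in> exercise_times M K Fk" .
    show "\<rho>b (\<lambda>\<omega>. - payoff K F S Y \<tau> \<omega> - wealth S (fst st) (snd st) (- p) \<tau> K \<omega>)
       \<le> \<rho>b (\<lambda>\<omega>. - payoff K F S Y \<tau> \<omega> - wealth S (fst st) (snd st) (- q) \<tau> K \<omega>)"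
      using assms unfolding monotone_rm_def
      by (smt (verit) wealth_shift)
  qed
  qed
qed

lemma c_implies_ge:
  assumes "erp_c_prop M K Fk \<rho>w \<rho>b F S Y p"
  shows "buyer_risk_nc M K Fk \<rho>b F S Y p \<le> writer_risk_nc M K Fk \<rho>w F S Y p"
proof -
  from assms obtain \<tau>s where ts: "\<tau>s \<in> exercise_times M K Fk"
    and eq: "writer_risk K Fk \<rho>w F S Y p \<tau>s = buyer_risk K Fk \<rho>b F S Y p \<tau>s"
    and mn: "\<forall>\<tau>\<in>exercise_times M K Fk. buyer_risk K Fk \<rho>b F S Y p \<tau>s \<le> buyer_risk K Fk \<rho>b F S Y p \<tau>"
    unfolding erp_c_prop_def by blast
  have "buyer_risk_nc M K Fk \<rho>b F S Y p \<le> buyer_risk K Fk \<rho>b F S Y p \<tau>s"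
    unfolding buyer_risk_nc_def buyer_risk_def
    by (rule INF_mono) (use ts in \<open>auto intro!: INF_lower\<close>)
  also have "\<dots> = writer_risk K Fk \<rho>w F S Y p \<tau>s" using eq by simp
  also have "\<dots> \<le> writer_risk_nc M K Fk \<rho>w F S Y p"
    unfolding writer_risk_nc_def writer_risk_def
    by (rule INF_mono) (use ts in \<open>auto intro!: SUP_upper\<close>)
  finally show ?thesis .
qed

theorem lemma2:
  fixes M :: "'w measure" and K :: nat and Fk :: "nat \<Rightarrow> 'w measure"
    and S :: "nat \<Rightarrow> 'w \<Rightarrow> real" and Y :: "nat \<Rightarrow> 'w \<Rightarrow> 'y" and YM :: "'y measure"
    and F :: "nat \<Rightarrow> real \<Rightarrow> 'y \<Rightarrow> real"
    and \<rho>w \<rho>b :: "('w \<Rightarrow> real) \<Rightarrow> ereal"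
    and pc pnc :: real
  assumes "prob_space M"
    and "dfiltration M K Fk"
    and "\<And>k. k \<le> K \<Longrightarrow> S k \<in> borel_measurable (Fk k)"
    and "\<And>k. k \<le> K \<Longrightarrow> Y k \<in> measurable (Fk k) YM"
    and "risk_measure M \<rho>w" and "risk_measure M \<rho>b"
    and "is_erp_c M K Fk \<rho>w \<rho>b F S Y pc"
    and "is_erp_nc M K Fk \<rho>w \<rho>b F S Y pnc"
  shows "pc \<le> pnc"
proof (rule ccontr)
  assume "\<not> pc \<le> pnc"
  hence le: "pnc \<le> pc" by simp
  have mw: "monotone_rm M \<rho>w" and mb: "monotone_rm M \<rho>b"
    using assms(5,6) unfolding risk_measure_def by auto
  have c: "erp_c_prop M K Fk \<rho>w \<rho>b F S Y pc" using assms(7) unfolding is_erp_c_def by simp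
  have nc: "erp_nc_prop M K Fk \<rho>w \<rho>b F S Y pnc"
    and un: "\<forall>q. erp_nc_prop M K Fk \<rho>w \<rho>b F S Y q \<longrightarrow> q = pnc"
    using assms(8) unfolding is_erp_nc_def by auto
  have a1: "writer_risk_nc M K Fk \<rho>w F S Y pc \<le> writer_risk_nc M K Fk \<rho>w F S Y pnc"
    by (rule wnc_mono[OF mw le])
  have a2: "buyer_risk_nc M K Fk \<rho>b F S Y pnc \<le> buyer_risk_nc M K Fk \<rho>b F S Y pc"
    by (rule bnc_mono[OF mb le])
  have a3: "buyer_risk_nc M K Fk \<rho>b F S Y pc \<le> writer_risk_nc M K Fk \<rho>w F S Y pc"
    by (rule c_implies_ge[OF c])
  have e: "writer_risk_nc M K Fk \<rho>w F S Y pnc = buyer_risk_nc M K Fk \<rho>b F S Y pnc"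
    and f: "\<bar>writer_risk_nc M K Fk \<rho>w F S Y pnc\<bar> \<noteq> \<infinity>"
    using nc unfolding erp_nc_prop_def by auto
  have "writer_risk_nc M K Fk \<rho>w F S Y pc = writer_risk_nc M K Fk \<rho>w F S Y pnc"
    using a1 a2 a3 e by (metis antisym order_trans)
  moreover have "buyer_risk_nc M K Fk \<rho>b F S Y pc = writer_risk_nc M K Fk \<rho>w F S Y pnc"
    using a1 a2 a3 e by (metis antisym order_trans)
  ultimately have "erp_nc_prop M K Fk \<rho>w \<rho>b F S Y pc"
    using f unfolding erp_nc_prop_def by simp
  with un have "pc = pnc" by blast
  with \<open>\<not> pc \<le> pnc\<close> show False by simp
qed

end
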